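(* For every modal formula $A$ and label $x$: if ${\sf GL}\vdash A$ then the sequent $\emptyset\Rightarrow x:A$ has an $\infty$-proof in $\mathsf{labK4}$.
   Context: Modal formulas: $A ::= p \mid \bot \mid A\wedge A \mid A \vee A \mid A \to A \mid \Box A \mid \Diamond A$. ${\sf GL}$ is the Hilbert system containing all classical propositional tautologies, the axioms $\Box(A\to B)\to(\Box A\to\Box B)$, $\Box A\to\Box\Box A$ and $\Box(\Box A\to A)\to\Box A$, closed under modus ponens and necessitation (from $A$ infer $\Box A$). ($\Diamond$ is interpreted classically as dual to $\Box$ in ${\sf GL}$.) Labelled sequents $\mathcal R,\Gamma\Rightarrow\Delta$ with $\mathcal R$ a set of relational atoms $xRy$ and $\Gamma,\Delta$ multisets of labelled formulas $x:A$. $\mathsf{labK4}$ rules (premisses / conclusion): id $\mathcal R,x:p\Rightarrow x:p$; $\bot$L $\mathcal R,x:\bot,\Gamma\Rightarrow\Delta$; cut: $\mathcal R,\Gamma\Rightarrow\Delta,x:A$ and $\mathcal R,\Gamma',x:A\Rightarrow\Delta'$ / $\mathcal R,\Gamma,\Gamma'\Rightarrow\Delta,\Delta'$; left/right weakening and contraction; thinning $\mathcal R,\Gamma\Rightarrow\Delta$ / $\mathcal R,\mathcal R',\Gamma\Rightarrow\Delta$; $\to$L: $\mathcal R,\Gamma\Rightarrow\Delta,x:A$ and $\mathcal R,\Gamma',x:B\Rightarrow\Delta'$ / $\mathcal R,\Gamma,\Gamma',x:A\to B\Rightarrow\Delta,\Delta'$; $\to$R: $\mathcal R,\Gamma,x:A\Rightarrow\Delta,x:B$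 / $\mathcal R,\Gamma\Rightarrow\Delta,x:A\to B$; $\wedge$L, $\wedge$R, $\vee$L, $\vee$R as in Gentzen's LK on labelled formulas with the same label; $\Diamond$L ($y$ fresh): $\mathcal R,xRy,\Gamma,y:A\Rightarrow\Delta$ / $\mathcal R,\Gamma,x:\Diamond A\Rightarrow\Delta$; $\Diamond$R: $\mathcal R,xRy,\Gamma\Rightarrow\Delta,y:A$ / $\mathcal R,xRy,\Gamma\Rightarrow\Delta,x:\Diamond A$; $\Box$R ($y$ fresh): $\mathcal R,xRy,\Gamma\Rightarrow\Delta,y:A$ / $\mathcal R,\Gamma\Rightarrow\Delta,x:\Box A$; $\Box$L: $\mathcal R,xRy,\Gamma,y:A\Rightarrow\Delta$ / $\mathcal R,xRy,\Gamma,x:\Box A\Rightarrow\Delta$; tr: $\mathcal R,xRy,yRz,xRz,\Gamma\Rightarrow\Delta$ / $\mathcal R,xRy,yRz,\Gamma\Rightarrow\Delta$. A preproof is a possibly infinite tree of rule instances whose leaves are zero-premiss rules; a trace along an infinite branch $(S_i)$ is a sequence of labels $(x_i)_{i\ge k}$ with, for each $i$, $x_i=x_{i+1}$ or $x_iRx_{i+1}$ in the relational context of $S_i$ (progress point); progressing = infinitely many progress points; an $\infty$-proof is a preproof all of whose infinite branches have a progressing trace. *)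

theory Defs
  imports "HOL-Library.Multiset"
begin

datatype 'a fm =
    Atom 'a
  | Bot
  | And "'a fm" "'a fm"
  | Or "'a fm" "'a fm"
  | Imp "'a fm" "'a fm"
  | Box "'a fm"
  | Dia "'a fm"

definition Neg :: "'a fm \<Rightarrow> 'a fm" where
  "Neg A = Imp A Bot"

definition Iff :: "'a fm \<Rightarrow> 'a fm \<Rightarrow> 'a fm" where
  "Iff A B = And (Imp A B) (Imp B A)"

text \<open>Propositional evaluation: atoms and modal formulas (Box A, Dia A) are treated
  as propositional variables, whose values are given by v.\<close>
fun peval :: "('a fm \<Rightarrow> bool) \<Rightarrow> 'a fm \<Rightarrow> bool" where
  "peval v (Atom p) = v (Atom p)"
| "peval v Bot = False"
| "peval v (And A B) = (peval v A \<and> peval v B)"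
| "peval v (Or A B) = (peval v A \<or> peval v B)"
| "peval v (Imp A B) = (peval v A \<longrightarrow> peval v B)"
| "peval v (Box A) = v (Box A)"
| "peval v (Dia A) = v (Dia A)"

definition tautology :: "'a fm \<Rightarrow> bool" where
  "tautology A \<longleftrightarrow> (\<forall>v. peval v A)"

inductive GL :: "'a fm \<Rightarrow> bool" where
  taut: "tautology A \<Longrightarrow> GL A"
| axK: "GL (Imp (Box (Imp A B)) (Imp (Box A) (Box B)))"
| ax4: "GL (Imp (Box A) (Box (Box A)))"
| axGL: "GL (Imp (Box (Imp (Box A) A)) (Box A))"
| axDual: "GL (Iff (Dia A) (Neg (Box (Neg A))))"
| mp: "GL (Imp A B) \<Longrightarrow> GL A \<Longrightarrow> GL B"
| nec: "GL A \<Longrightarrow> GL (Box A)"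

type_synonym label = nat
type_synonym 'a lfm = "label \<times> 'a fm"
type_synonym 'a sequent = "(label \<times> label) set \<times> 'a lfm multiset \<times> 'a lfm multiset"

definition labels :: "'a sequent \<Rightarrow> label set" where
  "labels S = (case S of (R, \<Gamma>, \<Delta>) \<Rightarrow>
     fst ` R \<union> snd ` R \<union> fst ` set_mset \<Gamma> \<union> fst ` set_mset \<Delta>)"

definition rel_ctx :: "'a sequent \<Rightarrow> (label \<times> label) set" where
  "rel_ctx S = fst S"

text \<open>rule_inst C Ps: C is the conclusion and Ps the list of premisses of an
  instance of a rule of labK4.\<close>
inductive rule_inst :: "'a sequent \<Rightarrow> 'a sequent list \<Rightarrow> bool" where
  ax_id: "rule_inst (R, {#(x, Atom p)#}, {#(x, Atom p)#}) []"
| ax_botL: "rule_inst (R, add_mset (x, Bot) \<Gamma>, \<Delta>) []"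
| cut: "rule_inst (R, \<Gamma> + \<Gamma>', \<Delta> + \<Delta>')
          [(R, \<Gamma>, add_mset (x, A) \<Delta>), (R, add_mset (x, A) \<Gamma>', \<Delta>')]"
| weakL: "rule_inst (R, add_mset (x, A) \<Gamma>, \<Delta>) [(R, \<Gamma>, \<Delta>)]"
| weakR: "rule_inst (R, \<Gamma>, add_mset (x, A) \<Delta>) [(R, \<Gamma>, \<Delta>)]"
| contrL: "rule_inst (R, add_mset (x, A) \<Gamma>, \<Delta>)
            [(R, add_mset (x, A) (add_mset (x, A) \<Gamma>), \<Delta>)]"
| contrR: "rule_inst (R, \<Gamma>, add_mset (x, A) \<Delta>)
            [(R, \<Gamma>, add_mset (x, A) (add_mset (x, A) \<Delta>))]"
| thin: "R \<subseteq> R' \<Longrightarrow> rule_inst (R', \<Gamma>, \<Delta>) [(R, \<Gamma>, \<Delta>)]"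
| impL: "rule_inst (R, add_mset (x, Imp A B) (\<Gamma> + \<Gamma>'), \<Delta> + \<Delta>')
          [(R, \<Gamma>, add_mset (x, A) \<Delta>), (R, add_mset (x, B) \<Gamma>', \<Delta>')]"
| impR: "rule_inst (R, \<Gamma>, add_mset (x, Imp A B) \<Delta>)
          [(R, add_mset (x, A) \<Gamma>, add_mset (x, B) \<Delta>)]"
| andL1: "rule_inst (R, add_mset (x, And A B) \<Gamma>, \<Delta>) [(R, add_mset (x, A) \<Gamma>, \<Delta>)]"
| andL2: "rule_inst (R, add_mset (x, And A B) \<Gamma>, \<Delta>) [(R, add_mset (x, B) \<Gamma>, \<Delta>)]"
| andR: "rule_inst (R, \<Gamma>, add_mset (x, And A B) \<Delta>)
          [(R, \<Gamma>, add_mset (x, A) \<Delta>), (R, \<Gamma>, add_mset (x, B) \<Delta>)]"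
| orL: "rule_inst (R, add_mset (x, Or A B) \<Gamma>, \<Delta>)
          [(R, add_mset (x, A) \<Gamma>, \<Delta>), (R, add_mset (x, B) \<Gamma>, \<Delta>)]"
| orR1: "rule_inst (R, \<Gamma>, add_mset (x, Or A B) \<Delta>) [(R, \<Gamma>, add_mset (x, A) \<Delta>)]"
| orR2: "rule_inst (R, \<Gamma>, add_mset (x, Or A B) \<Delta>) [(R, \<Gamma>, add_mset (x, B) \<Delta>)]"
| diaL: "y \<notin> labels (R, add_mset (x, Dia A) \<Gamma>, \<Delta>) \<Longrightarrow>
          rule_inst (R, add_mset (x, Dia A) \<Gamma>, \<Delta>)
            [(insert (x, y) R, add_mset (y, A) \<Gamma>, \<Delta>)]"
| diaR: "(x, y) \<in> R \<Longrightarrow>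
          rule_inst (R, \<Gamma>, add_mset (x, Dia A) \<Delta>) [(R, \<Gamma>, add_mset (y, A) \<Delta>)]"
| boxR: "y \<notin> labels (R, \<Gamma>, add_mset (x, Box A) \<Delta>) \<Longrightarrow>
          rule_inst (R, \<Gamma>, add_mset (x, Box A) \<Delta>)
            [(insert (x, y) R, \<Gamma>, add_mset (y, A) \<Delta>)]"
| boxL: "(x, y) \<in> R \<Longrightarrow>
          rule_inst (R, add_mset (x, Box A) \<Gamma>, \<Delta>) [(R, add_mset (y, A) \<Gamma>, \<Delta>)]"
| tr: "(x, y) \<in> R \<Longrightarrow> (y, z) \<in> R \<Longrightarrow>
          rule_inst (R, \<Gamma>, \<Delta>) [(insert (x, z) R, \<Gamma>, \<Delta>)]"

codatatype 'b ptree = PNode (root: 'b) (kids: "'b ptree list")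

coinductive preproof :: "'a sequent ptree \<Rightarrow> bool" where
  "rule_inst (root t) (map root (kids t)) \<Longrightarrow> (\<forall>u \<in> set (kids t). preproof u)
     \<Longrightarrow> preproof t"

definition infinite_branch :: "'b ptree \<Rightarrow> (nat \<Rightarrow> 'b ptree) \<Rightarrow> bool" where
  "infinite_branch t b \<longleftrightarrow> b 0 = t \<and> (\<forall>i. b (Suc i) \<in> set (kids (b i)))"

definition is_trace :: "(nat \<Rightarrow> 'a sequent) \<Rightarrow> nat \<Rightarrow> (nat \<Rightarrow> label) \<Rightarrow> bool" where
  "is_trace S k xs \<longleftrightarrow>
     (\<forall>i\<ge>k. xs i = xs (Suc i) \<or> (xs i, xs (Suc i)) \<in> rel_ctx (S i))"

definition progress_point :: "(nat \<Rightarrow> 'a sequent) \<Rightarrow> (nat \<Rightarrow> label) \<Rightarrow> nat \<Rightarrow> bool" where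
  "progress_point S xs i \<longleftrightarrow> (xs i, xs (Suc i)) \<in> rel_ctx (S i)"

definition progressing_trace :: "(nat \<Rightarrow> 'a sequent) \<Rightarrow> nat \<Rightarrow> (nat \<Rightarrow> label) \<Rightarrow> bool" where
  "progressing_trace S k xs \<longleftrightarrow>
     is_trace S k xs \<and> infinite {i. i \<ge> k \<and> progress_point S xs i}"

definition inf_proof :: "'a sequent ptree \<Rightarrow> bool" where
  "inf_proof t \<longleftrightarrow> preproof t \<and>
     (\<forall>b. infinite_branch t b \<longrightarrow>
        (\<exists>k xs. progressing_trace (\<lambda>i. root (b i)) k xs))"

definition has_inf_proof :: "'a sequent \<Rightarrow> bool" where
  "has_inf_proof S \<longleftrightarrow> (\<exists>t. root t = S \<and> inf_proof t)"

end

theory Submission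
  imports Defs "HOL-Library.Infinite_Set"
begin


lemma has_eq: "has_inf_proof S \<Longrightarrow> S = S' \<Longrightarrow> has_inf_proof S'" by simp

lemma branch_tail:
  assumes "infinite_branch t b" "b 1 = t'"
  shows "infinite_branch t' (\<lambda>i. b (Suc i))"
  using assms unfolding infinite_branch_def by auto

lemma trace_shift:
  assumes "progressing_trace (\<lambda>i. S (i + n)) k xs"
  shows "progressing_trace S (k + n) (\<lambda>i. xs (i - n))"
proof -
  have tr: "is_trace S (k+n) (\<lambda>i. xs (i - n))"
    using assms unfolding progressing_trace_def is_trace_def
    by (metis (no_types, lifting) Suc_diff_le add_diff_cancel_right' diff_le_mono
        le_add2 le_add_diff_inverse2 le_trans)
  have "(\<lambda>i. i + n) ` {i. i \<ge> k \<and> progress_point (\<lambda>i. S (i + n)) xs i}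
      \<subseteq> {i. i \<ge> k + n \<and> progress_point S (\<lambda>i. xs (i - n)) i}"
    by (auto simp: progress_point_def Suc_diff_le)
  moreover have "infinite ((\<lambda>i. i + n) ` {i. i \<ge> k \<and> progress_point (\<lambda>i. S (i + n)) xs i})"
    using assms unfolding progressing_trace_def
    by (simp add: finite_image_iff inj_on_def)
  ultimately show ?thesis using tr unfolding progressing_trace_def
    using finite_subset by blast
qed

lemma step:
  fixes C :: "'a sequent"
  assumes r: "rule_inst C Ps" and h: "\<forall>P\<in>set Ps. has_inf_proof P"
  shows "has_inf_proof C"
proof -
  define ch where "ch P = (SOME t. root t = P \<and> inf_proof t)" for P :: "'a sequent"
  have ch: "root (ch P) = P \<and> inf_proof (ch P)" if "P \<in> set Ps" for P
    using h that unfolding ch_def has_inf_proof_def by (metis (mono_tags, lifting) someI_ex)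
  define t where "t = PNode C (map ch Ps)"
  have mr: "map root (map ch Ps) = Ps"
    by (simp add: ch map_idI)
  have pp: "preproof t"
    unfolding t_def
    by (rule preproof.intros) (use r mr ch in \<open>auto simp: inf_proof_def\<close>)
  have br: "\<exists>k xs. progressing_trace (\<lambda>i. root (b i)) k xs" if b: "infinite_branch t b" for b
  proof -
    have "b 1 \<in> set (kids t)" using b unfolding infinite_branch_def
      by (metis One_nat_def)
    then obtain P where P: "P \<in> set Ps" "b 1 = ch P" unfolding t_def by auto
    have "infinite_branch (ch P) (\<lambda>i. b (Suc i))" using b P(2) unfolding infinite_branch_def by auto
    then obtain k xs where "progressing_trace (\<lambda>i. root (b (Suc i))) k xs"
      using ch[OF P(1)] unfolding inf_proof_def by blast
    then have "progressing_trace (\<lambda>i. root (b (i + 1))) k xs" by simp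
    from trace_shift[OF this] show ?thesis by blast
  qed
  show ?thesis unfolding has_inf_proof_def inf_proof_def
    using pp br by (intro exI[of _ t]) (auto simp: t_def)
qed

lemma step0: "rule_inst C [] \<Longrightarrow> has_inf_proof C" by (rule step) auto
lemma step1: "rule_inst C [P] \<Longrightarrow> has_inf_proof P \<Longrightarrow> has_inf_proof C" by (rule step) auto
lemma step2: "rule_inst C [P,Q] \<Longrightarrow> has_inf_proof P \<Longrightarrow> has_inf_proof Q \<Longrightarrow> has_inf_proof C"
  by (rule step) auto

lemma thin_has: "has_inf_proof (R, G, D) \<Longrightarrow> R \<subseteq> R' \<Longrightarrow> has_inf_proof (R', G, D)"
  by (rule step1[OF rule_inst.thin])

lemma ident: "has_inf_proof (R, {#(x, C)#}, {#(x, C)#})"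
proof (induction C arbitrary: R x)
  case (Atom p) show ?case by (rule step0) (rule rule_inst.ax_id)
next
  case Bot show ?case using step0[OF rule_inst.ax_botL[of R x "{#}" "{#(x,Bot)#}"]] by simp
next
  case (And A B)
  have a: "has_inf_proof (R, {#(x, And A B)#}, {#(x, A)#})"
    using step1[OF rule_inst.andL1[of R x A B "{#}" "{#(x,A)#}"]] And by simp
  have b: "has_inf_proof (R, {#(x, And A B)#}, {#(x, B)#})"
    using step1[OF rule_inst.andL2[of R x A B "{#}" "{#(x,B)#}"]] And by simp
  show ?case using step2[OF rule_inst.andR[of R "{#(x, And A B)#}" x A B "{#}"]] a b by simp
next
  case (Or A B)
  have a: "has_inf_proof (R, {#(x, A)#}, {#(x, Or A B)#})"
    using step1[OF rule_inst.orR1[of R "{#(x,A)#}" x A B "{#}"]] Or by simp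
  have b: "has_inf_proof (R, {#(x, B)#}, {#(x, Or A B)#})"
    using step1[OF rule_inst.orR2[of R "{#(x,B)#}" x A B "{#}"]] Or by simp
  show ?case using step2[OF rule_inst.orL[of R x A B "{#}" "{#(x, Or A B)#}"]] a b by simp
next
  case (Imp A B)
  have "has_inf_proof (R, add_mset (x, Imp A B) ({#(x,A)#} + {#}), {#} + {#(x,B)#})"
    by (rule step2[OF rule_inst.impL]) (use Imp in simp_all)
  then have "has_inf_proof (R, add_mset (x, A) {#(x, Imp A B)#}, add_mset (x, B) {#})"
    by (simp add: add_mset_commute)
  then show ?case by (rule step1[OF rule_inst.impR])
next
  case (Box C)
  have "has_inf_proof ({(x, Suc x)}, {#(Suc x, C)#}, {#(Suc x, C)#})" using Box .
  then have "has_inf_proof ({(x, Suc x)}, add_mset (x, Box C) {#}, {#(Suc x, C)#})"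
    by (intro step1[OF rule_inst.boxL]) auto
  then have "has_inf_proof ({}, {#(x, Box C)#}, add_mset (x, Box C) {#})"
    by (intro step1[OF rule_inst.boxR[where y="Suc x"]]) (auto simp: labels_def)
  then show ?case by (rule thin_has) simp
next
  case (Dia C)
  have "has_inf_proof ({(x, Suc x)}, {#(Suc x, C)#}, {#(Suc x, C)#})" using Dia .
  then have "has_inf_proof ({(x, Suc x)}, add_mset (Suc x, C) {#}, add_mset (x, Dia C) {#})"
    by (intro step1[OF rule_inst.diaR]) auto
  then have "has_inf_proof ({}, add_mset (x, Dia C) {#}, {#(x, Dia C)#})"
    by (intro step1[OF rule_inst.diaL[where y="Suc x"]]) (auto simp: labels_def)
  then show ?case by (rule thin_has) simp
qed

lemma weak: "has_inf_proof (R, G, D) \<Longrightarrow> has_inf_proof (R, G + G', D + D')"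
proof (induction G' arbitrary: G)
  case empty
  then show ?case
  proof (induction D' arbitrary: D)
    case empty then show ?case by simp
  next
    case (add a D')
    then show ?case using step1[OF rule_inst.weakR[of R G "fst a" "snd a" "D + D'"]] by simp
  qed
next
  case (add a G')
  then show ?case using step1[OF rule_inst.weakL[of R "fst a" "snd a" "G + G'" "D + D'"]] by simp
qed

lemma contrLs: "has_inf_proof (R, G + G + S, D) \<Longrightarrow> has_inf_proof (R, G + S, D)"
proof (induction G arbitrary: S)
  case empty then show ?case by simp
next
  case (add a G)
  have "has_inf_proof (R, G + G + add_mset a (add_mset a S), D)" using add.prems
    by (simp add: add_mset_commute)
  then have "has_inf_proof (R, G + add_mset a (add_mset a S), D)" using add.IH by blast
  then have "has_inf_proof (R, add_mset a (add_mset a (G + S)), D)" by simp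
  then have "has_inf_proof (R, add_mset a (G + S), D)"
    using step1[OF rule_inst.contrL[of R "fst a" "snd a" "G + S" D]] by simp
  then show ?case by simp
qed

lemma contrRs: "has_inf_proof (R, G, D + D + S) \<Longrightarrow> has_inf_proof (R, G, D + S)"
proof (induction D arbitrary: S)
  case empty then show ?case by simp
next
  case (add a D)
  have "has_inf_proof (R, G, D + D + add_mset a (add_mset a S))" using add.prems
    by (simp add: add_mset_commute)
  then have "has_inf_proof (R, G, D + add_mset a (add_mset a S))" using add.IH by blast
  then have "has_inf_proof (R, G, add_mset a (add_mset a (D + S)))" by simp
  then have "has_inf_proof (R, G, add_mset a (D + S))"
    using step1[OF rule_inst.contrR[of R G "fst a" "snd a" "D + S"]] by simp
  then show ?case by simp
qed



definition pvalid :: "'a fm multiset \<Rightarrow> 'a fm multiset \<Rightarrow> bool" where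
  "pvalid G D \<longleftrightarrow> (\<forall>v. (\<forall>A\<in>#G. peval v A) \<longrightarrow> (\<exists>A\<in>#D. peval v A))"

fun compound :: "'a fm \<Rightarrow> bool" where
  "compound (And A B) = True" | "compound (Or A B) = True" | "compound (Imp A B) = True"
| "compound _ = False"

abbreviation lab :: "label \<Rightarrow> 'a fm multiset \<Rightarrow> 'a lfm multiset" where
  "lab x M \<equiv> image_mset (Pair x) M"

abbreviation msz :: "'a fm multiset \<Rightarrow> nat" where
  "msz M \<equiv> sum_mset (image_mset size M)"

lemma atomic_peval: "\<not> compound C \<Longrightarrow> C \<noteq> Bot \<Longrightarrow> peval v C = v C"
  by (cases C) auto

lemma pcomplete: "pvalid G D \<Longrightarrow> has_inf_proof (R, lab x G, lab x D)"
proof (induction "msz G + msz D" arbitrary: G D rule: less_induct)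
  case less
  show ?case
  proof (cases "\<exists>C\<in>#G. compound C")
    case True
    then obtain C G0 where G: "G = add_mset C G0" and c: "compound C"
      by (metis multi_member_split)
    show ?thesis
    proof (cases C)
      case (And A B)
      have "has_inf_proof (R, lab x (add_mset A (add_mset B G0)), lab x D)"
        using less.prems G And by (intro less.hyps) (auto simp: pvalid_def)
      then have "has_inf_proof (R, add_mset (x, B) (add_mset (x, A) (lab x G0)), lab x D)"
        by (simp add: add_mset_commute)
      then have "has_inf_proof (R, add_mset (x, And A B) (add_mset (x, A) (lab x G0)), lab x D)"
        by (rule step1[OF rule_inst.andL2])
      then have "has_inf_proof (R, add_mset (x, A) (add_mset (x, And A B) (lab x G0)), lab x D)"
        by (simp add: add_mset_commute)
      then have "has_inf_proof (R, add_mset (x, And A B) (add_mset (x, And A B) (lab x G0)), lab x D)"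
        by (rule step1[OF rule_inst.andL1])
      then have "has_inf_proof (R, add_mset (x, And A B) (lab x G0), lab x D)"
        by (rule step1[OF rule_inst.contrL])
      then show ?thesis using G And by simp
    next
      case (Or A B)
      have a: "has_inf_proof (R, lab x (add_mset A G0), lab x D)"
        using less.prems G Or by (intro less.hyps) (auto simp: pvalid_def)
      have b: "has_inf_proof (R, lab x (add_mset B G0), lab x D)"
        using less.prems G Or by (intro less.hyps) (auto simp: pvalid_def)
      show ?thesis using step2[OF rule_inst.orL] a b G Or by simp
    next
      case (Imp A B)
      have a: "has_inf_proof (R, lab x G0, lab x (add_mset A D))"
        using less.prems G Imp by (intro less.hyps) (auto simp: pvalid_def)
      have b: "has_inf_proof (R, lab x (add_mset B G0), lab x D)"
        using less.prems G Imp by (intro less.hyps) (auto simp: pvalid_def)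
      have "has_inf_proof (R, add_mset (x, Imp A B) (lab x G0 + lab x G0), lab x D + lab x D)"
        by (rule step2[OF rule_inst.impL]) (use a b in simp_all)
      then have "has_inf_proof (R, lab x G0 + lab x G0 + {#(x, Imp A B)#}, lab x D + lab x D + {#})"
        by simp
      then have "has_inf_proof (R, lab x G0 + {#(x, Imp A B)#}, lab x D + lab x D + {#})"
        by (rule contrLs)
      then have "has_inf_proof (R, lab x G0 + {#(x, Imp A B)#}, lab x D + {#})"
        by (rule contrRs)
      then show ?thesis using G Imp by simp
    qed (use c in auto)
  next
    case nG: False
    show ?thesis
    proof (cases "\<exists>C\<in>#D. compound C")
      case True
      then obtain C D0 where D: "D = add_mset C D0" and c: "compound C"
        by (metis multi_member_split)
      show ?thesis
      proof (cases C)
        case (And A B)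
        have a: "has_inf_proof (R, lab x G, lab x (add_mset A D0))"
          using less.prems D And by (intro less.hyps) (auto simp: pvalid_def)
        have b: "has_inf_proof (R, lab x G, lab x (add_mset B D0))"
          using less.prems D And by (intro less.hyps) (auto simp: pvalid_def)
        show ?thesis using step2[OF rule_inst.andR] a b D And by simp
      next
        case (Or A B)
        have "has_inf_proof (R, lab x G, lab x (add_mset A (add_mset B D0)))"
          using less.prems D Or by (intro less.hyps) (auto simp: pvalid_def)
        then have "has_inf_proof (R, lab x G, add_mset (x, B) (add_mset (x, A) (lab x D0)))"
          by (simp add: add_mset_commute)
        then have "has_inf_proof (R, lab x G, add_mset (x, Or A B) (add_mset (x, A) (lab x D0)))"
          by (rule step1[OF rule_inst.orR2])
        then have "has_inf_proof (R, lab x G, add_mset (x, A) (add_mset (x, Or A B) (lab x D0)))"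
          by (simp add: add_mset_commute)
        then have "has_inf_proof (R, lab x G, add_mset (x, Or A B) (add_mset (x, Or A B) (lab x D0)))"
          by (rule step1[OF rule_inst.orR1])
        then have "has_inf_proof (R, lab x G, add_mset (x, Or A B) (lab x D0))"
          by (rule step1[OF rule_inst.contrR])
        then show ?thesis using D Or by simp
      next
        case (Imp A B)
        have "has_inf_proof (R, lab x (add_mset A G), lab x (add_mset B D0))"
          using less.prems D Imp by (intro less.hyps) (auto simp: pvalid_def)
        then show ?thesis using step1[OF rule_inst.impR] D Imp by simp
      qed (use c in auto)
    next
      case nD: False
      show ?thesis
      proof (cases "Bot \<in># G")
        case True
        then obtain G0 where G: "G = add_mset Bot G0" by (metis multi_member_split)
        show ?thesis using step0[OF rule_inst.ax_botL] G by simp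
      next
        case False
        define v where "v C = (C \<in># G)" for C
        have "\<forall>A\<in>#G. peval v A"
          using nG False atomic_peval v_def by metis
        then obtain C where C: "C \<in># D" "peval v C" using less.prems unfolding pvalid_def by blast
        have "C \<noteq> Bot" using C by auto
        then have "C \<in># G" using C nD atomic_peval v_def by metis
        then obtain G0 where G: "G = add_mset C G0" by (metis multi_member_split)
        obtain D0 where D: "D = add_mset C D0" using C by (metis multi_member_split)
        have "has_inf_proof (R, {#(x, C)#} + lab x G0, {#(x, C)#} + lab x D0)"
          by (rule weak[OF ident])
        then show ?thesis using G D by simp
      qed
    qed
  qed
qed

lemma taut_has: "tautology A \<Longrightarrow> has_inf_proof (R, {#}, {#(x, A)#})"
  using pcomplete[of "{#}" "{#A#}" R x] by (simp add: pvalid_def tautology_def)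



lemma boxtr: "has_inf_proof ({(x, y)}, {#(x, Box C)#}, {#(y, Box C)#})"
proof -
  define z where "z = Suc (x + y)"
  have "has_inf_proof (insert (x, z) {(y, z), (x, y)}, {#(z, C)#}, {#(z, C)#})" by (rule ident)
  then have "has_inf_proof (insert (x, z) {(y, z), (x, y)}, add_mset (x, Box C) {#}, {#(z, C)#})"
    by - (rule step1[OF rule_inst.boxL], auto)
  then have "has_inf_proof ({(y, z), (x, y)}, {#(x, Box C)#}, add_mset (z, C) {#})"
    by - (rule step1[OF rule_inst.tr[of x y _ z]], auto)
  then have "has_inf_proof (insert (y, z) {(x, y)}, {#(x, Box C)#}, add_mset (z, C) {#})"
    by simp
  then show ?thesis
    using step1[OF rule_inst.boxR[of z "{(x, y)}" "{#(x, Box C)#}" y C "{#}"]]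
    by (auto simp: labels_def z_def)
qed

lemma ax4_has: "has_inf_proof (R, {#}, {#(x, Imp (Box A) (Box (Box A)))#})"
proof -
  have "has_inf_proof ({}, {#(x, Box A)#}, add_mset (x, Box (Box A)) {#})"
    using step1[OF rule_inst.boxR[of "Suc x" "{}" "{#(x, Box A)#}" x "Box A" "{#}"]] boxtr[of x "Suc x" A]
    by (auto simp: labels_def)
  then have "has_inf_proof (R, {#(x, Box A)#}, add_mset (x, Box (Box A)) {#})"
    by (rule thin_has) simp
  then show ?thesis using step1[OF rule_inst.impR[of R "{#}" x "Box A" "Box (Box A)" "{#}"]] by simp
qed

lemma axK_has: "has_inf_proof (R, {#}, {#(x, Imp (Box (Imp A B)) (Imp (Box A) (Box B)))#})"
proof -
  define y where "y = Suc x"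
  have "has_inf_proof ({(x, y)}, lab y {#Imp A B, A#}, lab y {#B#})"
    by (rule pcomplete) (auto simp: pvalid_def)
  then have "has_inf_proof ({(x, y)}, add_mset (y, Imp A B) {#(y, A)#}, {#(y, B)#})" by simp
  then have "has_inf_proof ({(x, y)}, add_mset (x, Box (Imp A B)) {#(y, A)#}, {#(y, B)#})"
    by - (rule step1[OF rule_inst.boxL], auto)
  then have "has_inf_proof ({(x, y)}, add_mset (y, A) {#(x, Box (Imp A B))#}, {#(y, B)#})"
    by (simp add: add_mset_commute)
  then have "has_inf_proof ({(x, y)}, add_mset (x, Box A) {#(x, Box (Imp A B))#}, {#(y, B)#})"
    by - (rule step1[OF rule_inst.boxL], auto)
  then have "has_inf_proof ({}, {#(x, Box A), (x, Box (Imp A B))#}, add_mset (x, Box B) {#})"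
    using step1[OF rule_inst.boxR[of y "{}" "{#(x, Box A), (x, Box (Imp A B))#}" x B "{#}"]]
    by (auto simp: labels_def y_def)
  then have "has_inf_proof (R, add_mset (x, Box A) {#(x, Box (Imp A B))#}, add_mset (x, Box B) {#})"
    by (rule thin_has) simp
  then have "has_inf_proof (R, {#(x, Box (Imp A B))#}, add_mset (x, Imp (Box A) (Box B)) {#})"
    by (rule step1[OF rule_inst.impR])
  then show ?thesis using step1[OF rule_inst.impR[of R "{#}" x "Box (Imp A B)" "Imp (Box A) (Box B)" "{#}"]] by simp
qed

lemma axDual_has: "has_inf_proof (R, {#}, {#(x, Iff (Dia A) (Neg (Box (Neg A))))#})"
proof -
  define y where "y = Suc x"
  have p1: "has_inf_proof (R, {#}, {#(x, Imp (Dia A) (Imp (Box (Imp A Bot)) Bot))#})"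
  proof -
    have "has_inf_proof ({(x, y)}, lab y {#Imp A Bot, A#}, lab y {#}) "
      by (rule pcomplete) (auto simp: pvalid_def)
    then have "has_inf_proof ({(x, y)}, add_mset (y, Imp A Bot) {#(y, A)#}, {#} + {#(x, Bot)#})"
      using weak[of "{(x, y)}" _ _ "{#}" "{#(x, Bot)#}"] by simp
    then have "has_inf_proof ({(x, y)}, add_mset (x, Box (Imp A Bot)) {#(y, A)#}, {#(x, Bot)#})"
      by - (rule step1[OF rule_inst.boxL], auto)
    then have "has_inf_proof (insert (x, y) {}, add_mset (y, A) {#(x, Box (Imp A Bot))#}, {#(x, Bot)#})"
      by (simp add: add_mset_commute)
    then have "has_inf_proof ({}, add_mset (x, Dia A) {#(x, Box (Imp A Bot))#}, {#(x, Bot)#})"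
      by - (rule step1[OF rule_inst.diaL], (auto simp: labels_def y_def))
    then have "has_inf_proof (R, add_mset (x, Box (Imp A Bot)) {#(x, Dia A)#}, add_mset (x, Bot) {#})"
      by (auto intro: thin_has simp: add_mset_commute)
    then have "has_inf_proof (R, {#(x, Dia A)#}, add_mset (x, Imp (Box (Imp A Bot)) Bot) {#})"
      by (rule step1[OF rule_inst.impR])
    then show ?thesis using step1[OF rule_inst.impR[of R "{#}" x "Dia A" "Imp (Box (Imp A Bot)) Bot" "{#}"]] by simp
  qed
  have p2: "has_inf_proof (R, {#}, {#(x, Imp (Imp (Box (Imp A Bot)) Bot) (Dia A))#})"
  proof -
    have "has_inf_proof ({(x, y)}, lab y {#}, lab y {#Imp A Bot, A#}) "
      by (rule pcomplete) (auto simp: pvalid_def)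
    then have "has_inf_proof ({(x, y)}, {#}, add_mset (y, A) {#(y, Imp A Bot)#})"
      by (simp add: add_mset_commute)
    then have "has_inf_proof ({(x, y)}, {#}, add_mset (x, Dia A) {#(y, Imp A Bot)#})"
      by - (rule step1[OF rule_inst.diaR], auto)
    then have "has_inf_proof (insert (x, y) {}, {#}, add_mset (y, Imp A Bot) {#(x, Dia A)#})"
      by (simp add: add_mset_commute)
    then have "has_inf_proof ({}, {#}, add_mset (x, Box (Imp A Bot)) {#(x, Dia A)#})"
      by - (rule step1[OF rule_inst.boxR], (auto simp: labels_def y_def))
    then have a: "has_inf_proof (R, {#}, add_mset (x, Box (Imp A Bot)) {#(x, Dia A)#})"
      by (rule thin_has) simp
    have b: "has_inf_proof (R, add_mset (x, Bot) {#}, {#})"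
      by (rule step0[OF rule_inst.ax_botL])
    have "has_inf_proof (R, add_mset (x, Imp (Box (Imp A Bot)) Bot) ({#} + {#}), {#(x, Dia A)#} + {#})"
      by - (rule step2[OF rule_inst.impL], (use a b in simp_all))
    then have "has_inf_proof (R, add_mset (x, Imp (Box (Imp A Bot)) Bot) {#}, add_mset (x, Dia A) {#})"
      by simp
    then show ?thesis using step1[OF rule_inst.impR[of R "{#}" x "Imp (Box (Imp A Bot)) Bot" "Dia A" "{#}"]] by simp
  qed
  show ?thesis unfolding Iff_def Neg_def
    by (rule step2[OF rule_inst.andR[of R "{#}" x _ _ "{#}"]]) (use p1 p2 in simp_all)
qed

lemma mp_has:
  assumes "has_inf_proof ({}, {#}, {#(x, Imp A B)#})" "has_inf_proof ({}, {#}, {#(x, A)#})"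
  shows "has_inf_proof ({}, {#}, {#(x, B)#})"
proof -
  have "has_inf_proof ({}, add_mset (x, Imp A B) ({#} + {#}), {#} + {#(x, B)#})"
    by - (rule step2[OF rule_inst.impL], (use assms ident in simp_all))
  then have "has_inf_proof ({}, add_mset (x, Imp A B) {#}, {#(x, B)#})" by simp
  then have "has_inf_proof ({}, {#} + {#}, {#} + {#(x, B)#})"
    by - (rule step2[OF rule_inst.cut], (use assms in simp_all))
  then show ?thesis by simp
qed

lemma nec_has:
  assumes "\<And>y. has_inf_proof ({}, {#}, {#(y, A)#})"
  shows "has_inf_proof ({}, {#}, {#(x, Box A)#})"
proof -
  have "has_inf_proof ({(x, Suc x)}, {#}, add_mset (Suc x, A) {#})"
    using assms by (rule thin_has) simp
  then have "has_inf_proof ({}, {#}, add_mset (x, Box A) {#})"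
    using step1[OF rule_inst.boxR[of "Suc x" "{}" "{#}" x A "{#}"]] by (auto simp: labels_def)
  then show ?thesis by simp
qed



primcorec gen :: "('s \<Rightarrow> 'b \<times> 's list) \<Rightarrow> 's \<Rightarrow> 'b ptree" where
  "gen g s = PNode (fst (g s)) (map (gen g) (snd (g s)))"

lemma gen_Inl:
  assumes "\<And>t. g (Inl t) = (root t, map Inl (kids t))"
  shows "gen g (Inl t) = t"
proof (rule ptree.coinduct[of "\<lambda>a b. a = gen g (Inl b)"])
  fix a b assume "a = gen g (Inl b)"
  then show "root a = root b \<and> list_all2 (\<lambda>a b. a = gen g (Inl b)) (kids a) (kids b)"
    using assms by (auto simp: list.rel_map list.rel_refl)
qed simp

definition sI :: "'a fm \<Rightarrow> nat \<Rightarrow> 'a sequent ptree" where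
  "sI A x = (SOME t. root t = ({(x, Suc x)}, {#(Suc x, A)#}, {#(Suc x, A)#}) \<and> inf_proof t)"

definition sL :: "'a fm \<Rightarrow> nat \<Rightarrow> 'a sequent ptree" where
  "sL A x = (SOME t. root t = ({(x, Suc x)}, {#(x, Box (Imp (Box A) A))#},
     {#(Suc x, Box (Imp (Box A) A))#}) \<and> inf_proof t)"

lemma sI: "root (sI A x) = ({(x, Suc x)}, {#(Suc x, A)#}, {#(Suc x, A)#}) \<and> inf_proof (sI A x)"
  using ident[of "{(x, Suc x)}" "Suc x" A] unfolding sI_def has_inf_proof_def
  by (rule someI_ex)

lemma sL: "root (sL A x) = ({(x, Suc x)}, {#(x, Box (Imp (Box A) A))#},
     {#(Suc x, Box (Imp (Box A) A))#}) \<and> inf_proof (sL A x)"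
  using boxtr[of x "Suc x" "Imp (Box A) A"] unfolding sL_def has_inf_proof_def
  by (rule someI_ex)

definition stg :: "'a fm \<Rightarrow> nat \<Rightarrow> nat \<Rightarrow> 'a sequent" where
  "stg A x j = (if j = 0 then ({}, {#(x, Box (Imp (Box A) A))#}, {#(x, Box A)#})
   else if j = 1 then ({(x, Suc x)}, {#(x, Box (Imp (Box A) A))#}, {#(Suc x, A)#})
   else if j = 2 then ({(x, Suc x)}, {#(x, Box (Imp (Box A) A)), (x, Box (Imp (Box A) A))#}, {#(Suc x, A)#})
   else if j = 3 then ({(x, Suc x)}, {#(Suc x, Imp (Box A) A), (x, Box (Imp (Box A) A))#}, {#(Suc x, A)#})
   else if j = 4 then ({(x, Suc x)}, {#(x, Box (Imp (Box A) A))#}, {#(Suc x, Box A)#})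
   else ({(x, Suc x)}, {#(Suc x, Box (Imp (Box A) A))#}, {#(Suc x, Box A)#}))"

definition nxts :: "'a fm \<Rightarrow> nat \<Rightarrow> nat \<Rightarrow> ('a sequent ptree + nat \<times> nat) list" where
  "nxts A x j = (if j = 3 then [Inr (x, 4), Inl (sI A x)]
     else if j = 4 then [Inl (sL A x), Inr (x, 5)]
     else if j = 5 then [Inr (Suc x, 0)] else [Inr (x, Suc j)])"

definition glg :: "'a fm \<Rightarrow> ('a sequent ptree + nat \<times> nat) \<Rightarrow>
    'a sequent \<times> ('a sequent ptree + nat \<times> nat) list" where
  "glg A s = (case s of Inl t \<Rightarrow> (root t, map Inl (kids t))
     | Inr (x, j) \<Rightarrow> (stg A x j, nxts A x j))"

lemma genInl: "gen (glg A) (Inl t) = t"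
  by (rule gen_Inl) (simp add: glg_def)

lemma stage_rule: "j \<le> 5 \<Longrightarrow> rule_inst (stg A x j) (map root (map (gen (glg A)) (nxts A x j)))"
proof -
  assume j: "j \<le> 5"
  let ?B = "Imp (Box A) A"
  have c: "j = 0 \<or> j = 1 \<or> j = 2 \<or> j = 3 \<or> j = 4 \<or> j = 5" using j by auto
  have r0: "rule_inst (stg A x 0) [stg A x 1]"
    using rule_inst.boxR[of "Suc x" "{}" "{#(x, Box ?B)#}" x A "{#}"]
    by (simp add: stg_def labels_def)
  have r1: "rule_inst (stg A x 1) [stg A x 2]"
    using rule_inst.contrL[of "{(x, Suc x)}" x "Box ?B" "{#}" "{#(Suc x, A)#}"]
    by (simp add: stg_def)
  have r2: "rule_inst (stg A x 2) [stg A x 3]"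
    using rule_inst.boxL[of x "Suc x" "{(x, Suc x)}" ?B "{#(x, Box ?B)#}" "{#(Suc x, A)#}"]
    by (simp add: stg_def)
  have r3: "rule_inst (stg A x 3) [stg A x 4, ({(x, Suc x)}, {#(Suc x, A)#}, {#(Suc x, A)#})]"
    using rule_inst.impL[of "{(x, Suc x)}" "Suc x" "Box A" A "{#(x, Box ?B)#}" "{#}" "{#}" "{#(Suc x, A)#}"]
    by (simp add: stg_def)
  have r4: "rule_inst (stg A x 4) [({(x, Suc x)}, {#(x, Box ?B)#}, {#(Suc x, Box ?B)#}), stg A x 5]"
    using rule_inst.cut[of "{(x, Suc x)}" "{#(x, Box ?B)#}" "{#}" "{#}" "{#(Suc x, Box A)#}" "Suc x" "Box ?B"]
    by (simp add: stg_def)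
  have r5: "rule_inst (stg A x 5) [stg A (Suc x) 0]"
    using rule_inst.thin[of "{}" "{(x, Suc x)}" "{#(Suc x, Box ?B)#}" "{#(Suc x, Box A)#}"]
    by (simp add: stg_def)
  have sIr: "root (sI A x) = ({(x, Suc x)}, {#(Suc x, A)#}, {#(Suc x, A)#})" using sI by blast
  have sLr: "root (sL A x) = ({(x, Suc x)}, {#(x, Box ?B)#}, {#(Suc x, Box ?B)#})" using sL by blast
  have m0: "map root (map (gen (glg A)) (nxts A x 0)) = [stg A x 1]"
    by (simp add: nxts_def glg_def)
  have m1: "map root (map (gen (glg A)) (nxts A x 1)) = [stg A x 2]"
    by (simp add: nxts_def glg_def numeral_2_eq_2)
  have m2: "map root (map (gen (glg A)) (nxts A x 2)) = [stg A x 3]"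
    by (simp add: nxts_def glg_def)
  have m3: "map root (map (gen (glg A)) (nxts A x 3)) = [stg A x 4, ({(x, Suc x)}, {#(Suc x, A)#}, {#(Suc x, A)#})]"
    by (simp add: nxts_def glg_def genInl sIr)
  have m4: "map root (map (gen (glg A)) (nxts A x 4)) = [({(x, Suc x)}, {#(x, Box ?B)#}, {#(Suc x, Box ?B)#}), stg A x 5]"
    by (simp add: nxts_def glg_def genInl sLr)
  have m5: "map root (map (gen (glg A)) (nxts A x 5)) = [stg A (Suc x) 0]"
    by (simp add: nxts_def glg_def)
  show ?thesis using c
  proof (elim disjE)
    assume "j = 0" then show ?thesis using m0 r0 by simp
  next
    assume "j = 1" then show ?thesis using m1 r1 by simp
  next
    assume "j = 2" then show ?thesis using m2 r2 by simp
  next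
    assume "j = 3" then show ?thesis using m3 r3 by simp
  next
    assume "j = 4" then show ?thesis using m4 r4 by simp
  next
    assume "j = 5" then show ?thesis using m5 r5 by simp
  qed
qed

lemma gl_preproof: "j \<le> 5 \<Longrightarrow> preproof (gen (glg A) (Inr (x, j)))"
proof (rule preproof.coinduct[where X="\<lambda>u. \<exists>x j. j \<le> 5 \<and> u = gen (glg A) (Inr (x, j))"])
  fix u assume "\<exists>x j. j \<le> 5 \<and> u = gen (glg A) (Inr (x, j))"
  then obtain x j where j: "j \<le> 5" and u: "u = gen (glg A) (Inr (x, j))" by blast
  have "rule_inst (root u) (map root (kids u))"
    using stage_rule[OF j] u by (simp add: glg_def)
  moreover have "\<forall>w\<in>set (kids u). (\<exists>x j. j \<le> 5 \<and> w = gen (glg A) (Inr (x, j))) \<or> preproof w"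
  proof
    fix w assume "w \<in> set (kids u)"
    then obtain s where s: "s \<in> set (nxts A x j)" "w = gen (glg A) s" using u by (auto simp: glg_def)
    from s(1) j have "(\<exists>x' j'. j' \<le> 5 \<and> s = Inr (x', j')) \<or> s = Inl (sI A x) \<or> s = Inl (sL A x)"
      by (auto simp: nxts_def split: if_splits)
    then show "(\<exists>x j. j \<le> 5 \<and> w = gen (glg A) (Inr (x, j))) \<or> preproof w"
      using s(2) sI[of A x] sL[of A x] by (auto simp: inf_proof_def genInl)
  qed
  ultimately show "\<exists>t. u = t \<and> rule_inst (root t) (map root (kids t)) \<and>
      (\<forall>w\<in>set (kids t). (\<exists>x j. j \<le> 5 \<and> w = gen (glg A) (Inr (x, j))) \<or> preproof w)" by blast
qed auto



lemma glg_Inr[simp]: "glg A (Inr (y, k)) = (stg A y k, nxts A y k)"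
  by (simp add: glg_def)

lemma ar: "(Suc i) mod 6 = (if i mod 6 = 5 then 0 else Suc (i mod 6)) \<and>
   (Suc i) div 6 = (if i mod 6 = 5 then Suc (i div 6) else i div 6)"
  by (simp add: mod_Suc div_Suc)

lemma gl_branch:
  assumes b: "infinite_branch (gen (glg A) (Inr (x0, 0))) b"
  shows "\<exists>k xs. progressing_trace (\<lambda>i. root (b i)) k xs"
proof (cases "\<exists>i t. b i = t \<and> inf_proof t \<and> (\<exists>y. t = sI A y \<or> t = sL A y)")
  case True
  then obtain i t where bi: "b i = t" and t: "inf_proof t" by blast
  have "infinite_branch t (\<lambda>n. b (n + i))"
    using b bi unfolding infinite_branch_def by auto
  then obtain k xs where "progressing_trace (\<lambda>n. root (b (n + i))) k xs"
    using t unfolding inf_proof_def by blast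
  from trace_shift[of "\<lambda>i. root (b i)", OF this] show ?thesis by blast
next
  case False
  have nside: "b i \<noteq> sI A y \<and> b i \<noteq> sL A y" for i y
    using False sI sL by blast
  have bi: "b i = gen (glg A) (Inr (x0 + i div 6, i mod 6))" for i
  proof (induction i)
    case 0 then show ?case using b by (simp add: infinite_branch_def)
  next
    case (Suc i)
    define x where "x = x0 + i div 6"
    have "b (Suc i) \<in> set (kids (b i))" using b by (simp add: infinite_branch_def)
    then obtain s where s: "s \<in> set (nxts A x (i mod 6))" "b (Suc i) = gen (glg A) s"
      using Suc by (auto simp: x_def)
    have "s \<noteq> Inl (sI A x) \<and> s \<noteq> Inl (sL A x)"
      using s(2) nside by (auto simp: genInl)
    then have "s = (if i mod 6 = 5 then Inr (Suc x, 0) else Inr (x, Suc (i mod 6)))"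
      using s(1) by (auto simp: nxts_def split: if_splits)
    then show ?case using s(2) ar[of i] by (auto simp: x_def)
  qed
  have rt: "root (b i) = stg A (x0 + i div 6) (i mod 6)" for i
    by (simp add: bi)
  define xs where "xs i = x0 + i div 6" for i
  have pp: "progress_point (\<lambda>i. root (b i)) xs i" if "i mod 6 = 5" for i
    using that ar[of i] by (simp add: progress_point_def rel_ctx_def rt xs_def stg_def)
  have tr: "is_trace (\<lambda>i. root (b i)) 0 xs"
    unfolding is_trace_def
  proof (intro allI impI)
    fix i :: nat
    show "xs i = xs (Suc i) \<or> (xs i, xs (Suc i)) \<in> rel_ctx (root (b i))"
      using pp[of i] ar[of i] by (cases "i mod 6 = 5") (auto simp: xs_def progress_point_def)
  qed
  have "infinite {i. 0 \<le> i \<and> progress_point (\<lambda>i. root (b i)) xs i}"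
    unfolding infinite_nat_iff_unbounded_le
  proof
    fix m :: nat
    have "(6 * m + 5) mod 6 = 5" by simp
    then show "\<exists>n\<ge>m. n \<in> {i. 0 \<le> i \<and> progress_point (\<lambda>i. root (b i)) xs i}"
      using pp by (intro exI[of _ "6 * m + 5"]) auto
  qed
  then show ?thesis using tr unfolding progressing_trace_def by blast
qed

lemma axGL_has: "has_inf_proof (R, {#}, {#(x, Imp (Box (Imp (Box A) A)) (Box A))#})"
proof -
  have "inf_proof (gen (glg A) (Inr (x, 0)))"
    unfolding inf_proof_def using gl_preproof[of 0 A x] gl_branch by blast
  moreover have "root (gen (glg A) (Inr (x, 0))) = ({}, {#(x, Box (Imp (Box A) A))#}, {#(x, Box A)#})"
    by (simp add: stg_def)
  ultimately have "has_inf_proof ({}, {#(x, Box (Imp (Box A) A))#}, add_mset (x, Box A) {#})"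
    unfolding has_inf_proof_def by (intro exI[of _ "gen (glg A) (Inr (x, 0))"]) simp
  then have "has_inf_proof (R, add_mset (x, Box (Imp (Box A) A)) {#}, add_mset (x, Box A) {#})"
    by (rule thin_has) simp
  then show ?thesis using step1[OF rule_inst.impR[of R "{#}" x "Box (Imp (Box A) A)" "Box A" "{#}"]]
    by simp
qed

theorem mainTheorem13:
  fixes A :: "'a fm" and x :: label
  assumes "GL A"
  shows "has_inf_proof ({}, {#}, {#(x, A)#})"
  using assms
proof (induction arbitrary: x rule: GL.induct)
  case (taut A) then show ?case by (rule taut_has)
next
  case (axK A B) then show ?case by (rule axK_has)
next
  case (ax4 A) then show ?case by (rule ax4_has)
next
  case (axGL A) then show ?case by (rule axGL_has)
next
  case (axDual A) then show ?case by (rule axDual_has)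
next
  case (mp A B) then show ?case using mp_has by blast
next
  case (nec A) then show ?case using nec_has by blast
qed


end
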